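(* Let $A\in\mathbb{R}^{n\times n}$, let $s$ be an integer with $1\leq s<d(A)$, and let $v_0\in\mathbb{R}^n$ with $\|v_0\|=1$ and $d(A,v_0)\geq s+1$. Let $\Sigma_*^A$ be the set of limit vectors (accumulation points) of the sequence $\{v_k\}$ of the Arnoldi cross iteration ACI($s$) started at $v_0$. Then: (1) $\Sigma_*^A$ is a closed and connected subset of $\mathbb{R}^n$; (2) $\Sigma_*^A\subseteq\Sigma^A$, and every $v_*\in\Sigma_*^A$ satisfies $v_*=T_{A^T}(T_A(v_* ))$.
   Context: Notation: for $A\in\mathbb{R}^{n\times n}$, $d(A)$ is the degree of the minimal polynomial of $A$, $d(A,v)$ is the grade of $v$ w.r.t. $A$ (degree of the monic polynomial $p$ of smallest degree with $p(A)v=0$), $\mathcal{K}_k(A,v)=\mathrm{span}\{v,Av,\dots,A^{k-1}v\}$, $\mathcal{M}_s$ is the set of real monic polynomials of degree $s$, and $\|\cdot\|$ is the Euclidean norm. For a matrix $B$ and a vector $u$ with $d(B,u)\geq s$, let $P_s(\cdot\,;u)\in\mathcal{M}_s$ (determined w.r.t. $B$) be the unique monic polynomial with $P_s(B;u)u\perp\mathcal{K}_s(B,u)$. The Arnoldi cross iteration ACI($s$) started at $v_0$ is: for $k=0,1,2,\dots$: $\widetilde w_k=P_s(A;v_k)v_k$, $w_k=\widetilde w_k/\|\widetilde w_k\|$, $\widetilde v_{k+1}=P_s(A^T;w_k)w_k$, $v_{k+1}=\widetilde v_{k+1}/\|\widetilde v_{k+1}\|$. Define $\Sigma^A:=\{v\in\mathbb{R}^n:\|v\|=1,\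 d(A,v)\geq s+1\}$ and, for unit $v$ with $d(A,v)\geq s+1$, $T_A(v):=P_s(A;v)v/\|P_s(A;v)v\|$; $T_{A^T}$ is defined analogously with $A^T$ in place of $A$. Thus $v_{k+1}=T_{A^T}(T_A(v_k))$. *)

theory Defs
  imports "HOL-Analysis.Analysis" "HOL-Computational_Algebra.Polynomial"
begin

definition krylov_vec :: "real^'n^'n \<Rightarrow> nat \<Rightarrow> real^'n \<Rightarrow> real^'n" where
  "krylov_vec A i v = ((\<lambda>x. A *v x) ^^ i) v"

definition poly_mat_vec :: "real poly \<Rightarrow> real^'n^'n \<Rightarrow> real^'n \<Rightarrow> real^'n" where
  "poly_mat_vec p A v = (\<Sum>i\<le>degree p. coeff p i *\<^sub>R krylov_vec A i v)"

definition monic_polys :: "nat \<Rightarrow> real poly set" where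
  "monic_polys s = {p. degree p = s \<and> lead_coeff p = 1}"

definition min_poly_degree :: "real^'n^'n \<Rightarrow> nat" where
  "min_poly_degree A = (LEAST k. \<exists>p\<in>monic_polys k. \<forall>v. poly_mat_vec p A v = 0)"

definition grade :: "real^'n^'n \<Rightarrow> real^'n \<Rightarrow> nat" where
  "grade A v = (LEAST k. \<exists>p\<in>monic_polys k. poly_mat_vec p A v = 0)"

definition krylov_space :: "nat \<Rightarrow> real^'n^'n \<Rightarrow> real^'n \<Rightarrow> (real^'n) set" where
  "krylov_space k A v = span {krylov_vec A i v | i. i < k}"

definition P_poly :: "nat \<Rightarrow> real^'n^'n \<Rightarrow> real^'n \<Rightarrow> real poly" where
  "P_poly s B u = (THE p. p \<in> monic_polys s \<and>
      (\<forall>x\<in>krylov_space s B u. inner (poly_mat_vec p B u) x = 0))"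

definition T_map :: "nat \<Rightarrow> real^'n^'n \<Rightarrow> real^'n \<Rightarrow> real^'n" where
  "T_map s A v = (let w = poly_mat_vec (P_poly s A v) A v in w /\<^sub>R norm w)"

definition Sigma_set :: "nat \<Rightarrow> real^'n^'n \<Rightarrow> (real^'n) set" where
  "Sigma_set s A = {v. norm v = 1 \<and> grade A v \<ge> s + 1}"

primrec aci_seq :: "nat \<Rightarrow> real^'n^'n \<Rightarrow> real^'n \<Rightarrow> nat \<Rightarrow> real^'n" where
  "aci_seq s A v0 0 = v0"
| "aci_seq s A v0 (Suc k) = T_map s (transpose A) (T_map s A (aci_seq s A v0 k))"

definition limit_vectors :: "(nat \<Rightarrow> 'a::topological_space) \<Rightarrow> 'a set" where
  "limit_vectors x = {y. \<exists>r. strict_mono r \<and> (x \<circ> r) \<longlonglongrightarrow> y}"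

end

theory Submission
  imports Defs
begin


lemma kv_Suc: "krylov_vec B (Suc i) v = B *v krylov_vec B i v"
  by (simp add: krylov_vec_def)

lemma kv_Suc_right: "krylov_vec B (Suc i) v = krylov_vec B i (B *v v)"
  by (simp add: krylov_vec_def funpow_Suc_right del: funpow.simps)

lemma kv_0[simp]: "krylov_vec B 0 v = v"
  by (simp add: krylov_vec_def)

lemma kv_linear: "linear (krylov_vec B i)"
proof (induction i)
  case 0 then show ?case by (simp add: krylov_vec_def[abs_def] linear_id[unfolded id_def])
next
  case (Suc i)
  have "krylov_vec B (Suc i) = (\<lambda>x. B *v x) \<circ> krylov_vec B i"
    by (rule ext) (simp add: kv_Suc)
  then show ?case using linear_compose[OF Suc matrix_vector_mul_linear[of B]] by (simp add: o_def)
qed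

lemma kv_cont: "isCont (krylov_vec B i) v"
  using kv_linear[of B i] by (simp add: linear_continuous_at linear_conv_bounded_linear)

lemma kv_add: "krylov_vec B m (krylov_vec B j u) = krylov_vec B (m + j) u"
  by (simp add: krylov_vec_def funpow_add)

lemma kv_adj: "inner (krylov_vec (transpose B) j w) u = inner w (krylov_vec B j u)"
proof (induction j arbitrary: u)
  case 0 then show ?case by simp
next
  case (Suc j)
  have "inner (krylov_vec (transpose B) (Suc j) w) u = inner (krylov_vec (transpose B) j w) (B *v u)"
    by (simp add: kv_Suc dot_lmul_matrix)
  also have "\<dots> = inner w (krylov_vec B (Suc j) u)" by (simp add: Suc kv_Suc_right)
  finally show ?case .
qed

lemma kspace_rep:
  "y \<in> krylov_space k B v \<longleftrightarrow> (\<exists>c. y = (\<Sum>j<k. c j *\<^sub>R krylov_vec B j v))"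
proof
  assume "y \<in> krylov_space k B v"
  moreover have "krylov_space k B v \<subseteq> {y. \<exists>c. y = (\<Sum>j<k. c j *\<^sub>R krylov_vec B j v)}"
    unfolding krylov_space_def
  proof (rule span_minimal)
    show "{krylov_vec B i v |i. i < k} \<subseteq> {y. \<exists>c. y = (\<Sum>j<k. c j *\<^sub>R krylov_vec B j v)}"
    proof safe
      fix i assume "i < k"
      then show "\<exists>c. krylov_vec B i v = (\<Sum>j<k. c j *\<^sub>R krylov_vec B j v)"
      proof (intro exI[of _ "\<lambda>j. if j = i then 1 else 0"])
        have eq: "(\<lambda>j. (if j = i then 1 else 0) *\<^sub>R krylov_vec B j v) = (\<lambda>j. if j = i then krylov_vec B j v else 0)"
          by auto
        show "krylov_vec B i v = (\<Sum>j<k. (if j = i then 1 else 0) *\<^sub>R krylov_vec B j v)"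
          unfolding eq using \<open>i < k\<close> by simp
      qed
    qed
    show "subspace {y. \<exists>c. y = (\<Sum>j<k. c j *\<^sub>R krylov_vec B j v)}"
      unfolding subspace_def
    proof safe
      show "\<exists>c. 0 = (\<Sum>j<k. c j *\<^sub>R krylov_vec B j v)" by (intro exI[of _ "\<lambda>j. 0"]) simp
    next
      fix c d
      show "\<exists>e. (\<Sum>j<k. c j *\<^sub>R krylov_vec B j v) + (\<Sum>j<k. d j *\<^sub>R krylov_vec B j v) = (\<Sum>j<k. e j *\<^sub>R krylov_vec B j v)"
        by (intro exI[of _ "\<lambda>j. c j + d j"]) (simp add: sum.distrib scaleR_add_left)
    next
      fix a :: real and c
      show "\<exists>e. a *\<^sub>R (\<Sum>j<k. c j *\<^sub>R krylov_vec B j v) = (\<Sum>j<k. e j *\<^sub>R krylov_vec B j v)"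
        by (intro exI[of _ "\<lambda>j. a * c j"]) (simp add: scaleR_sum_right)
    qed
  qed
  ultimately show "\<exists>c. y = (\<Sum>j<k. c j *\<^sub>R krylov_vec B j v)" by blast
next
  assume "\<exists>c. y = (\<Sum>j<k. c j *\<^sub>R krylov_vec B j v)"
  then obtain c where "y = (\<Sum>j<k. c j *\<^sub>R krylov_vec B j v)" by blast
  then show "y \<in> krylov_space k B v"
    unfolding krylov_space_def
    by (simp only:) (intro span_sum span_scale span_base, blast)
qed

lemma kspace_mono: "i \<le> j \<Longrightarrow> krylov_space i B v \<subseteq> krylov_space j B v"
  unfolding krylov_space_def by (rule span_mono) auto

lemma kv_in_kspace: "j < i \<Longrightarrow> krylov_vec B j v \<in> krylov_space i B v"
  unfolding krylov_space_def by (rule span_base) auto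

lemma kspace_subspace: "subspace (krylov_space i B v)"
  unfolding krylov_space_def by (rule subspace_span)

lemma kspace_Suc: "krylov_space (Suc i) B v = span (insert (krylov_vec B i v) {krylov_vec B j v |j. j < i})"
  unfolding krylov_space_def by (rule arg_cong[where f=span]) (auto simp: less_Suc_eq)

primrec Qp :: "real^'n^'n \<Rightarrow> nat \<Rightarrow> real^'n \<Rightarrow> real^'n \<Rightarrow> real^'n" where
  "Qp B 0 v x = 0"
| "Qp B (Suc i) v x = (let r = krylov_vec B i v - Qp B i v (krylov_vec B i v) in
      Qp B i v x + ((inner x r) / (inner r r)) *\<^sub>R r)"

definition rsd :: "real^'n^'n \<Rightarrow> nat \<Rightarrow> real^'n \<Rightarrow> real^'n" where
  "rsd B i v = krylov_vec B i v - Qp B i v (krylov_vec B i v)"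

declare Qp.simps(2)[simp del]

lemma Qp_Suc: "Qp B (Suc i) v x = Qp B i v x + ((inner x (rsd B i v)) / (inner (rsd B i v) (rsd B i v))) *\<^sub>R rsd B i v"
  unfolding rsd_def by (subst Qp.simps(2)) (simp only: Let_def)

lemma Qp_in: "Qp B i v x \<in> krylov_space i B v"
proof (induction i arbitrary: x)
  case 0 then show ?case by (simp add: krylov_space_def span_zero)
next
  case (Suc i)
  have r: "rsd B i v \<in> krylov_space (Suc i) B v"
    unfolding rsd_def
    using Suc[of "krylov_vec B i v"] kspace_mono[of i "Suc i" B v] kv_in_kspace[of i "Suc i" B v]
    by (auto intro: subspace_diff[OF kspace_subspace])
  show ?case unfolding Qp_Suc
    using Suc[of x] kspace_mono[of i "Suc i" B v] r
    by (auto intro!: subspace_add[OF kspace_subspace] subspace_scale[OF kspace_subspace])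
qed

lemma Qp_orth: "y \<in> krylov_space i B v \<Longrightarrow> inner (x - Qp B i v x) y = 0"
proof (induction i arbitrary: x y)
  case 0 then show ?case by (simp add: krylov_space_def)
next
  case (Suc i)
  define r where "r = rsd B i v"
  have rorth: "inner r z = 0" if "z \<in> krylov_space i B v" for z
    using Suc.IH[OF that, of "krylov_vec B i v"] by (simp add: r_def rsd_def)
  have Qin: "Qp B i v z \<in> krylov_space i B v" for z by (rule Qp_in)
  define c where "c = inner x r / inner r r"
  have e: "x - Qp B (Suc i) v x = (x - Qp B i v x) - c *\<^sub>R r"
    by (simp add: Qp_Suc r_def c_def algebra_simps)
  have gen: "inner (x - Qp B (Suc i) v x) z = 0" if "z \<in> insert (krylov_vec B i v) {krylov_vec B j v |j. j < i}" for z
  proof (cases "z = krylov_vec B i v")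
    case True
    have z: "z = r + Qp B i v (krylov_vec B i v)" by (simp add: True r_def rsd_def)
    have a: "inner (x - Qp B i v x) (Qp B i v (krylov_vec B i v)) = 0" by (rule Suc.IH[OF Qin])
    have b: "inner r (Qp B i v (krylov_vec B i v)) = 0" by (rule rorth[OF Qin])
    have d: "inner (Qp B i v x) r = 0" using rorth[OF Qin[of x]] by (simp add: inner_commute)
    have f: "c * inner r r = inner x r"
    proof (cases "r = 0")
      case True then show ?thesis by simp
    next
      case False then show ?thesis by (simp add: c_def)
    qed
    show ?thesis unfolding e z using a b d f
      by (simp add: inner_add_right inner_diff_left algebra_simps)
  next
    case False
    then have zin: "z \<in> krylov_space i B v" using that by (auto intro: kv_in_kspace)
    show ?thesis unfolding e using Suc.IH[OF zin, of x] rorth[OF zin]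
      by (simp add: inner_diff_left)
  qed
  show ?case
    using orthogonal_to_span[of y "insert (krylov_vec B i v) {krylov_vec B j v |j. j < i}" "x - Qp B (Suc i) v x"]
      Suc.prems gen unfolding kspace_Suc orthogonal_def by blast
qed

lemma rsd_orth: "y \<in> krylov_space i B v \<Longrightarrow> inner (rsd B i v) y = 0"
  unfolding rsd_def by (rule Qp_orth)

lemma rsd_in: "rsd B i v \<in> krylov_space (Suc i) B v"
  unfolding rsd_def
  using Qp_in[of B i v "krylov_vec B i v"] kspace_mono[of i "Suc i" B v] kv_in_kspace[of i "Suc i" B v]
  by (auto intro: subspace_diff[OF kspace_subspace])

lemma Qp_cont:
  fixes B :: "real^'n^'n" and v0 :: "real^'n" and f :: "real^'n \<Rightarrow> real^'n"
  assumes "\<forall>j<i. rsd B j v0 \<noteq> 0" and "isCont f v0"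
  shows "isCont (\<lambda>v. Qp B i v (f v)) v0"
  using assms
proof (induction i arbitrary: f)
  case 0 then show ?case by simp
next
  case (Suc i)
  have r: "isCont (\<lambda>v. rsd B i v) v0"
    unfolding rsd_def using Suc.IH[of "krylov_vec B i"] Suc.prems kv_cont[of _ B i]
    by (auto intro!: continuous_intros)
  have nz: "inner (rsd B i v0) (rsd B i v0) \<noteq> 0" using Suc.prems by simp
  have q: "isCont (\<lambda>v. Qp B i v (f v)) v0" using Suc by auto
  show ?case unfolding Qp_Suc
    by (intro continuous_intros q r Suc.prems nz)
qed

lemma rsd_cont:
  fixes B :: "real^'n^'n" and v0 :: "real^'n"
  assumes "\<forall>j<i. rsd B j v0 \<noteq> 0"
  shows "isCont (rsd B i) v0"
  unfolding rsd_def[abs_def] using Qp_cont[OF assms kv_cont[of _ B i]] kv_cont[of _ B i]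
  by (intro continuous_intros)

definition ann :: "real^'n^'n \<Rightarrow> real^'n \<Rightarrow> nat \<Rightarrow> bool" where
  "ann B u s \<longleftrightarrow> (\<exists>c. c s = 1 \<and> (\<Sum>j\<le>s. c j *\<^sub>R krylov_vec B j u) = 0)"

lemma sum_split:
  "(\<Sum>j\<le>s. c j *\<^sub>R krylov_vec B j u) = c s *\<^sub>R krylov_vec B s u + (\<Sum>j<s. c j *\<^sub>R krylov_vec B j u)"
  by (subst lessThan_Suc_atMost[symmetric]) (simp add: add.commute)

lemma rsd_rep: "\<exists>c. c s = 1 \<and> rsd B s u = (\<Sum>j\<le>s. c j *\<^sub>R krylov_vec B j u)"
proof -
  obtain d where d: "Qp B s u (krylov_vec B s u) = (\<Sum>j<s. d j *\<^sub>R krylov_vec B j u)"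
    using Qp_in[of B s u "krylov_vec B s u"] kspace_rep by blast
  define c where "c = (\<lambda>j. if j = s then 1 else - d j)"
  have "(\<Sum>j<s. c j *\<^sub>R krylov_vec B j u) = (\<Sum>j<s. - (d j *\<^sub>R krylov_vec B j u))"
    by (rule sum.cong) (auto simp: c_def)
  then have "(\<Sum>j\<le>s. c j *\<^sub>R krylov_vec B j u) = rsd B s u"
    unfolding sum_split by (simp add: c_def rsd_def d sum_negf)
  then show ?thesis by (intro exI[of _ c]) (simp add: c_def)
qed

lemma key_inner:
  assumes "c s = 1"
  shows "inner (rsd B s u) (\<Sum>j\<le>s. c j *\<^sub>R krylov_vec B j u) = inner (rsd B s u) (rsd B s u)"
proof -
  define k where "k = (\<Sum>j<s. c j *\<^sub>R krylov_vec B j u)"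
  have kin: "k \<in> krylov_space s B u" unfolding k_def kspace_rep by blast
  have Qin: "Qp B s u (krylov_vec B s u) \<in> krylov_space s B u" by (rule Qp_in)
  have m: "(\<Sum>j\<le>s. c j *\<^sub>R krylov_vec B j u) = rsd B s u + (Qp B s u (krylov_vec B s u) + k)"
    unfolding sum_split k_def[symmetric] using assms by (simp add: rsd_def)
  have "inner (rsd B s u) (Qp B s u (krylov_vec B s u) + k) = 0"
    by (rule rsd_orth) (rule subspace_add[OF kspace_subspace Qin kin])
  then show ?thesis unfolding m by (simp add: inner_add_right)
qed

lemma min_norm:
  assumes "c s = 1"
  shows "norm (rsd B s u) \<le> norm (\<Sum>j\<le>s. c j *\<^sub>R krylov_vec B j u)"
proof -
  let ?r = "rsd B s u" and ?m = "\<Sum>j\<le>s. c j *\<^sub>R krylov_vec B j u"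
  have "norm ?r * norm ?r = inner ?r ?m" using key_inner[where c=c and s=s, OF assms, of B u]
    by (simp add: norm_eq_sqrt_inner)
  also have "\<dots> \<le> norm ?r * norm ?m" by (rule norm_cauchy_schwarz)
  finally have "norm ?r * norm ?r \<le> norm ?r * norm ?m" .
  then show ?thesis
    by (cases "norm ?r = 0") (auto simp: mult_le_cancel_left)
qed

lemma rsd_nz: "\<not> ann B u s \<Longrightarrow> rsd B s u \<noteq> 0"
  using rsd_rep[of s B u] unfolding ann_def by metis

lemma sum_adj:
  "inner (\<Sum>j\<le>s. c j *\<^sub>R krylov_vec (transpose B) j w) u = inner w (\<Sum>j\<le>s. c j *\<^sub>R krylov_vec B j u)"
  by (simp add: inner_sum_left inner_sum_right kv_adj)

lemma L_inner:
  assumes "\<not> ann B u s" and "c s = 1"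
  shows "inner (\<Sum>j\<le>s. c j *\<^sub>R krylov_vec (transpose B) j (rsd B s u /\<^sub>R norm (rsd B s u))) u = norm (rsd B s u)"
proof -
  let ?r = "rsd B s u"
  have nz: "norm ?r \<noteq> 0" using rsd_nz[OF assms(1)] by simp
  have "inner (\<Sum>j\<le>s. c j *\<^sub>R krylov_vec (transpose B) j (?r /\<^sub>R norm ?r)) u
      = inner (?r /\<^sub>R norm ?r) (\<Sum>j\<le>s. c j *\<^sub>R krylov_vec B j u)" by (rule sum_adj)
  also have "\<dots> = inner ?r ?r / norm ?r" using key_inner[where c=c and s=s, OF assms(2), of B u] by (simp add: divide_inverse mult.commute)
  also have "\<dots> = norm ?r" using nz by (simp add: power2_norm_eq_inner[symmetric] power2_eq_square)
  finally show ?thesis .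
qed

lemma L1:
  assumes "\<not> ann B u s"
  shows "\<not> ann (transpose B) (rsd B s u /\<^sub>R norm (rsd B s u)) s"
proof
  assume "ann (transpose B) (rsd B s u /\<^sub>R norm (rsd B s u)) s"
  then obtain c where c: "c s = 1" "(\<Sum>j\<le>s. c j *\<^sub>R krylov_vec (transpose B) j (rsd B s u /\<^sub>R norm (rsd B s u))) = 0"
    unfolding ann_def by blast
  have "norm (rsd B s u) = 0" using L_inner[where c=c and s=s, OF assms c(1)] c(2) by simp
  then show False using rsd_nz[OF assms] by simp
qed

lemma L2:
  assumes "\<not> ann B u s"
  shows "inner (rsd (transpose B) s (rsd B s u /\<^sub>R norm (rsd B s u))) u = norm (rsd B s u)"
proof -
  obtain c where c: "c s = 1" "rsd (transpose B) s (rsd B s u /\<^sub>R norm (rsd B s u))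
     = (\<Sum>j\<le>s. c j *\<^sub>R krylov_vec (transpose B) j (rsd B s u /\<^sub>R norm (rsd B s u)))"
    using rsd_rep by blast
  show ?thesis unfolding c(2) by (rule L_inner[where c=c and s=s, OF assms c(1)])
qed

lemma ann_Suc:
  assumes "ann B u g" shows "ann B u (Suc g)"
proof -
  obtain c where c: "c g = 1" "(\<Sum>j\<le>g. c j *\<^sub>R krylov_vec B j u) = 0"
    using assms unfolding ann_def by blast
  define c' where "c' = (\<lambda>i. case i of 0 \<Rightarrow> 0 | Suc j \<Rightarrow> c j)"
  have "B *v (\<Sum>j\<le>g. c j *\<^sub>R krylov_vec B j u) = (\<Sum>j\<le>g. c j *\<^sub>R krylov_vec B (Suc j) u)"
    by (simp add: linear_sum[OF matrix_vector_mul_linear] linear_scale[OF matrix_vector_mul_linear] kv_Suc)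
  then have "(\<Sum>j\<le>g. c j *\<^sub>R krylov_vec B (Suc j) u) = 0" using c(2) by simp
  then have "(\<Sum>i\<le>Suc g. c' i *\<^sub>R krylov_vec B i u) = 0"
    unfolding sum.atMost_Suc_shift by (simp add: c'_def)
  moreover have "c' (Suc g) = 1" using c(1) by (simp add: c'_def)
  ultimately show ?thesis unfolding ann_def by blast
qed

lemma ann_mono: "ann B u g \<Longrightarrow> g \<le> s \<Longrightarrow> ann B u s"
proof (induction s)
  case 0 then show ?case by simp
next
  case (Suc s) then show ?case by (cases "g = Suc s") (auto intro: ann_Suc)
qed

lemma coeff_sum_monoms: "coeff (\<Sum>j\<in>S. monom (c j) j) i = (if i \<in> S then c i else 0)" if "finite S"
  using that by (simp add: coeff_sum)

lemma ann_poly: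
  assumes "ann B u s" shows "\<exists>p\<in>monic_polys s. poly_mat_vec p B u = 0"
proof -
  obtain c where c: "c s = 1" "(\<Sum>j\<le>s. c j *\<^sub>R krylov_vec B j u) = 0"
    using assms unfolding ann_def by blast
  define p where "p = (\<Sum>j\<le>s. monom (c j) j)"
  have cp: "coeff p i = (if i \<le> s then c i else 0)" for i
    unfolding p_def by (simp add: coeff_sum_monoms)
  have dp: "degree p = s"
    using degree_le[of s p] le_degree[of p s] cp c(1) by (auto intro: antisym)
  have "p \<in> monic_polys s" using dp cp c(1) by (simp add: monic_polys_def)
  moreover have "poly_mat_vec p B u = 0"
    unfolding poly_mat_vec_def dp using c(2) by (simp add: cp)
  ultimately show ?thesis by blast
qed

lemma poly_ann:
  assumes "p \<in> monic_polys k" "poly_mat_vec p B u = 0" shows "ann B u k"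
  using assms unfolding ann_def monic_polys_def poly_mat_vec_def
  by (intro exI[of _ "coeff p"]) auto

lemma ann_grade: "ann B u s \<Longrightarrow> grade B u \<le> s"
  unfolding grade_def by (rule Least_le) (rule ann_poly)

lemma ann_exists: "\<exists>k. ann B (u::real^'n) k"
proof (rule ccontr)
  assume "\<nexists>k. ann B u k"
  then have nz: "rsd B k u \<noteq> 0" for k using rsd_nz by blast
  have orth: "inner (rsd B j u) (rsd B i u) = 0" if "i < j" for i j
    using rsd_orth[of "rsd B i u" j B u] rsd_in[of B i u] kspace_mono[of "Suc i" j B u] that by auto
  define N where "N = CARD('n)"
  define R where "R = (\<lambda>k. rsd B k u) ` {..N}"
  have inj: "inj_on (\<lambda>k. rsd B k u) {..N}"
  proof (rule inj_onI)
    fix i j assume "i \<in> {..N}" "j \<in> {..N}" and eq: "rsd B i u = rsd B j u"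
    show "i = j"
    proof (rule ccontr)
      assume "i \<noteq> j"
      then consider "i < j" | "j < i" by linarith
      then show False
      proof cases
        case 1 then show False using orth[OF 1] eq nz[of j] by simp
      next
        case 2 then show False using orth[OF 2] eq nz[of i] by simp
      qed
    qed
  qed
  have "pairwise orthogonal R"
    unfolding pairwise_def R_def orthogonal_def
    by clarify (metis orth inner_commute linorder_neqE_nat)
  moreover have "0 \<notin> R" using nz unfolding R_def by auto
  ultimately have "independent R" by (rule pairwise_orthogonal_independent)
  then have "card R \<le> DIM(real^'n)" using independent_bound by blast
  moreover have "card R = N + 1" unfolding R_def using card_image[OF inj] by simp
  ultimately show False by (simp add: N_def)
qed

lemma grade_iff: "s + 1 \<le> grade B u \<longleftrightarrow> \<not> ann B u s"
proof
  assume "s + 1 \<le> grade B u"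
  then show "\<not> ann B u s" using ann_grade[of B u s] by auto
next
  assume na: "\<not> ann B u s"
  obtain k where "ann B u k" using ann_exists by blast
  then have ex: "\<exists>k. \<exists>p\<in>monic_polys k. poly_mat_vec p B u = 0" using ann_poly by blast
  have "\<exists>p\<in>monic_polys (grade B u). poly_mat_vec p B u = 0"
    unfolding grade_def by (rule LeastI_ex[OF ex])
  then have ag: "ann B u (grade B u)" using poly_ann by blast
  show "s + 1 \<le> grade B u"
  proof (rule ccontr)
    assume "\<not> s + 1 \<le> grade B u"
    then have "grade B u \<le> s" by simp
    then show False using ann_mono[OF ag] na by blast
  qed
qed

lemma P_poly_eq:
  assumes na: "\<not> ann B u s"
  shows "poly_mat_vec (P_poly s B u) B u = rsd B s u"
proof -
  obtain d where d: "Qp B s u (krylov_vec B s u) = (\<Sum>j<s. d j *\<^sub>R krylov_vec B j u)"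
    using Qp_in[of B s u "krylov_vec B s u"] kspace_rep by blast
  define p0 where "p0 = monom 1 s - (\<Sum>j<s. monom (d j) j)"
  have cp0: "coeff p0 i = (if i = s then 1 else 0) - (if i < s then d i else 0)" for i
    unfolding p0_def by (simp add: coeff_sum_monoms)
  have dp0: "degree p0 = s"
    using degree_le[of s p0] le_degree[of p0 s] cp0 by (auto intro: antisym)
  have mp0: "p0 \<in> monic_polys s" using dp0 cp0 by (simp add: monic_polys_def)
  have pmv_gen: "poly_mat_vec p B u = krylov_vec B s u + (\<Sum>j<s. coeff p j *\<^sub>R krylov_vec B j u)"
    if "p \<in> monic_polys s" for p
  proof -
    have "degree p = s" "coeff p s = 1" using that by (auto simp: monic_polys_def)
    then show ?thesis unfolding poly_mat_vec_def by (simp add: sum_split[of "coeff p"])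
  qed
  have "(\<Sum>j<s. coeff p0 j *\<^sub>R krylov_vec B j u) = (\<Sum>j<s. - (d j *\<^sub>R krylov_vec B j u))"
    by (rule sum.cong) (auto simp: cp0)
  then have pv0: "poly_mat_vec p0 B u = rsd B s u"
    unfolding pmv_gen[OF mp0] by (simp add: rsd_def d sum_negf)
  have P0: "p0 \<in> monic_polys s \<and> (\<forall>x\<in>krylov_space s B u. inner (poly_mat_vec p0 B u) x = 0)"
    using mp0 pv0 rsd_orth by auto
  have uniq: "p = p0" if hp: "p \<in> monic_polys s \<and> (\<forall>x\<in>krylov_space s B u. inner (poly_mat_vec p B u) x = 0)" for p
  proof -
    define D where "D = poly_mat_vec p B u - rsd B s u"
    have "D = (\<Sum>j<s. coeff p j *\<^sub>R krylov_vec B j u) + Qp B s u (krylov_vec B s u)"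
      unfolding D_def pmv_gen[OF hp[THEN conjunct1]] by (simp add: rsd_def)
    moreover have "(\<Sum>j<s. coeff p j *\<^sub>R krylov_vec B j u) \<in> krylov_space s B u"
      unfolding kspace_rep by blast
    ultimately have Din: "D \<in> krylov_space s B u"
      using subspace_add[OF kspace_subspace _ Qp_in] by simp
    have i1: "inner (poly_mat_vec p B u) D = 0" using hp Din by blast
    have i2: "inner (rsd B s u) D = 0" by (rule rsd_orth[OF Din])
    have "inner D D = inner (poly_mat_vec p B u - rsd B s u) D" by (subst (1) D_def) (rule refl)
    also have "\<dots> = 0" using i1 i2 by (simp add: inner_diff_left)
    finally have "inner D D = 0" .
    then have pv: "poly_mat_vec p B u = rsd B s u" unfolding D_def by simp
    define e where "e = p - p0"
    have dp: "degree p = s" "coeff p s = 1" using hp unfolding monic_polys_def by auto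
    have ce: "coeff e s = 0" using dp cp0 by (simp add: e_def)
    have sume: "(\<Sum>j\<le>s. coeff e j *\<^sub>R krylov_vec B j u) = 0"
    proof -
      have "(\<Sum>j\<le>s. coeff e j *\<^sub>R krylov_vec B j u) = poly_mat_vec p B u - poly_mat_vec p0 B u"
        unfolding poly_mat_vec_def dp dp0 e_def by (simp add: scaleR_diff_left sum_subtractf)
      then show ?thesis using pv pv0 by simp
    qed
    show "p = p0"
    proof (rule ccontr)
      assume "p \<noteq> p0"
      then have enz: "e \<noteq> 0" by (simp add: e_def)
      define g where "g = degree e"
      have "g \<le> s" unfolding g_def e_def using dp dp0 by (simp add: degree_diff_le)
      moreover have "g \<noteq> s" using ce enz by (auto simp: g_def)
      ultimately have gs: "g < s" by simp
      define lc where "lc = coeff e g"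
      have lcnz: "lc \<noteq> 0" using enz by (simp add: lc_def g_def)
      have gsum: "(\<Sum>j\<le>g. coeff e j *\<^sub>R krylov_vec B j u) = (\<Sum>j\<le>s. coeff e j *\<^sub>R krylov_vec B j u)"
        by (rule sum.mono_neutral_left) (use gs in \<open>auto simp: g_def coeff_eq_0\<close>)
      then have "(\<Sum>j\<le>g. (coeff e j / lc) *\<^sub>R krylov_vec B j u) = 0"
      proof -
        have "(\<Sum>j\<le>g. (coeff e j / lc) *\<^sub>R krylov_vec B j u) = inverse lc *\<^sub>R (\<Sum>j\<le>g. coeff e j *\<^sub>R krylov_vec B j u)"
          by (simp add: scaleR_sum_right divide_inverse mult.commute)
        then show ?thesis using sume gsum by simp
      qed
      moreover have "coeff e g / lc = 1" using lcnz by (simp add: lc_def)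
      ultimately have "ann B u g" unfolding ann_def by (intro exI[of _ "\<lambda>j. coeff e j / lc"]) simp
      then show False using ann_mono[of B u g s] gs na by simp
    qed
  qed
  have "P_poly s B u = p0" unfolding P_poly_def using P0 uniq by (intro the_equality) blast+
  then show ?thesis using pv0 by simp
qed

lemma T_map_eq: "\<not> ann B u s \<Longrightarrow> T_map s B u = rsd B s u /\<^sub>R norm (rsd B s u)"
  unfolding T_map_def Let_def by (simp add: P_poly_eq)



lemma lv_char:
  fixes x :: "nat \<Rightarrow> 'a::metric_space"
  shows "y \<in> limit_vectors x \<longleftrightarrow> (\<forall>e>0. \<forall>N. \<exists>k\<ge>N. dist (x k) y < e)"
proof
  assume "y \<in> limit_vectors x"
  then obtain r where r: "strict_mono r" "(x \<circ> r) \<longlonglongrightarrow> y" unfolding limit_vectors_def by blast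
  show "\<forall>e>0. \<forall>N. \<exists>k\<ge>N. dist (x k) y < e"
  proof (intro allI impI)
    fix e :: real and N assume "e > 0"
    then obtain no where no: "\<forall>n\<ge>no. dist ((x \<circ> r) n) y < e" using r(2) unfolding lim_sequentially by blast
    have "r (max no N) \<ge> N" using seq_suble[OF r(1), of "max no N"] by simp
    moreover have "dist (x (r (max no N))) y < e" using no by simp
    ultimately show "\<exists>k\<ge>N. dist (x k) y < e" by blast
  qed
next
  assume H: "\<forall>e>0. \<forall>N. \<exists>k\<ge>N. dist (x k) y < e"
  define sel where "sel n m = (SOME k. m < k \<and> dist (x k) y < inverse (real (Suc n)))" for n m
  have sel: "m < sel n m \<and> dist (x (sel n m)) y < inverse (real (Suc n))" for n m
  proof -
    have "\<exists>k\<ge>Suc m. dist (x k) y < inverse (real (Suc n))" using H by simp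
    then have "\<exists>k. m < k \<and> dist (x k) y < inverse (real (Suc n))" by (auto simp: Suc_le_eq)
    then show ?thesis unfolding sel_def by (rule someI_ex)
  qed
  define r where "r = rec_nat (sel 0 0) (\<lambda>n m. sel (Suc n) m)"
  have r0: "r 0 = sel 0 0" and rS: "r (Suc n) = sel (Suc n) (r n)" for n by (simp_all add: r_def)
  have "strict_mono r" unfolding strict_mono_Suc_iff using sel rS by simp
  moreover have d: "dist (x (r n)) y < inverse (real (Suc n))" for n
  proof (cases n)
    case 0 then show ?thesis using sel[of 0 0] r0 by simp
  next
    case (Suc m) then show ?thesis using sel[of "r m" "Suc m"] rS[of m] by simp
  qed
  have "(x \<circ> r) \<longlonglongrightarrow> y" unfolding lim_sequentially
  proof (intro allI impI)
    fix e :: real assume "e > 0"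
    then obtain n0 where n0: "inverse (real (Suc n0)) < e" using reals_Archimedean by blast
    have "dist ((x \<circ> r) n) y < e" if "n \<ge> n0" for n
    proof -
      have iv: "inverse (real (Suc n)) \<le> inverse (real (Suc n0))" using that by (simp add: field_simps)
      show ?thesis using d[of n] n0 iv by (simp only: comp_apply)
    qed
    then show "\<exists>no. \<forall>n\<ge>no. dist ((x \<circ> r) n) y < e" by blast
  qed
  ultimately show "y \<in> limit_vectors x" unfolding limit_vectors_def by blast
qed

lemma lv_closed:
  fixes x :: "nat \<Rightarrow> 'a::metric_space"
  shows "closed (limit_vectors x)"
  unfolding closed_def open_dist
proof (intro ballI)
  fix y assume "y \<in> - limit_vectors x"
  then obtain e N where e: "e > 0" and N: "\<forall>k\<ge>N. dist (x k) y \<ge> e"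
    unfolding Compl_iff lv_char by (auto simp: not_less)
  have "z \<in> - limit_vectors x" if "dist z y < e / 2" for z
  proof
    assume "z \<in> limit_vectors x"
    then obtain k where k: "k \<ge> N" "dist (x k) z < e / 2" using e unfolding lv_char
      by (metis half_gt_zero)
    have "dist (x k) y \<le> dist (x k) z + dist z y" by (rule dist_triangle)
    then show False using N k that by force
  qed
  then show "\<exists>e>0. \<forall>z. dist z y < e \<longrightarrow> z \<in> - limit_vectors x"
    using e by (intro exI[of _ "e/2"]) auto
qed

lemma crossing:
  fixes g :: "nat \<Rightarrow> real"
  assumes ab: "a < b" and lo: "\<forall>N. \<exists>k\<ge>N. g k < a" and hi: "\<forall>N. \<exists>k\<ge>N. g k > b"
    and st: "\<forall>k\<ge>M. \<bar>g (Suc k) - g k\<bar> < b - a"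
  shows "\<exists>k\<ge>N. a \<le> g k \<and> g k \<le> b"
proof (rule ccontr)
  assume C: "\<not> (\<exists>k\<ge>N. a \<le> g k \<and> g k \<le> b)"
  obtain k where k: "k \<ge> max N M" "g k < a" using lo by blast
  have "g j < a" if "j \<ge> k" for j
    using that
  proof (induction j rule: dec_induct)
    case base then show ?case using k by simp
  next
    case (step j)
    have "\<bar>g (Suc j) - g j\<bar> < b - a" using st step k by simp
    then have "g (Suc j) < b" using step by linarith
    moreover have "\<not> (a \<le> g (Suc j) \<and> g (Suc j) \<le> b)" using C step k by simp
    ultimately show ?case by linarith
  qed
  moreover obtain m where "m \<ge> k" "g m > b" using hi by blast
  ultimately show False using ab by force
qed

lemma lv_connected:
  fixes x :: "nat \<Rightarrow> 'a::euclidean_space"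
  assumes K: "compact K" and xK: "\<forall>k. x k \<in> K"
    and st: "(\<lambda>k. dist (x (Suc k)) (x k)) \<longlonglongrightarrow> 0"
  shows "connected (limit_vectors x)"
proof -
  let ?L = "limit_vectors x"
  have LK: "?L \<subseteq> K"
  proof
    fix y assume "y \<in> ?L"
    then obtain r where r: "(x \<circ> r) \<longlonglongrightarrow> y" unfolding limit_vectors_def by blast
    show "y \<in> K" by (rule closed_sequentially[OF compact_imp_closed[OF K] _ r]) (simp add: xK)
  qed
  show ?thesis
  proof (subst connected_closed_set[OF lv_closed], rule notI, elim exE conjE)
    fix C1 C2 assume c1: "closed C1" and c2: "closed C2" and n1: "C1 \<noteq> {}" and n2: "C2 \<noteq> {}"
      and U: "C1 \<union> C2 = ?L" and D: "C1 \<inter> C2 = {}"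
    have "bounded C1" using LK U compact_imp_bounded[OF K] bounded_subset by blast
    then have cc1: "compact C1" using c1 by (simp add: compact_eq_bounded_closed)
    define \<delta> where "\<delta> = setdist C1 C2"
    have dpos: "\<delta> > 0" unfolding \<delta>_def using setdist_gt_0_compact_closed[OF cc1 c2] n1 n2 D by simp
    define f where "f z = infdist z C1 - infdist z C2" for z
    have lip: "\<bar>f a - f b\<bar> \<le> 2 * dist a b" for a b
      using infdist_triangle_abs[of a C1 b] infdist_triangle_abs[of a C2 b] unfolding f_def by linarith
    have fC1: "f z \<le> - \<delta>" if "z \<in> C1" for z
    proof -
      have "setdist C1 C2 \<le> setdist {z} C2" by (rule setdist_subset_left) (use that in auto)
      moreover have "infdist z C1 = 0" using that by (rule infdist_zero)
      ultimately show ?thesis by (simp add: f_def \<delta>_def infdist_eq_setdist[of z C2])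
    qed
    have fC2: "f z \<ge> \<delta>" if "z \<in> C2" for z
    proof -
      have "setdist C2 C1 \<le> setdist {z} C1" by (rule setdist_subset_left) (use that in auto)
      moreover have "infdist z C2 = 0" using that by (rule infdist_zero)
      ultimately show ?thesis by (simp add: f_def \<delta>_def infdist_eq_setdist[of z C1] setdist_sym)
    qed
    have lo: "\<forall>N. \<exists>k\<ge>N. f (x k) < - \<delta> / 2"
    proof
      fix N
      obtain y where y: "y \<in> C1" using n1 by blast
      then have "y \<in> ?L" using U by blast
      then obtain k where k: "k \<ge> N" "dist (x k) y < \<delta> / 4" unfolding lv_char using dpos
        by (metis divide_pos_pos zero_less_numeral)
      have "f (x k) \<le> f y + 2 * dist (x k) y" using lip[of "x k" y] by linarith
      then have "f (x k) < - \<delta> / 2" using fC1[OF y] k by linarith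
      then show "\<exists>k\<ge>N. f (x k) < - \<delta> / 2" using k by blast
    qed
    have hi: "\<forall>N. \<exists>k\<ge>N. f (x k) > \<delta> / 2"
    proof
      fix N
      obtain y where y: "y \<in> C2" using n2 by blast
      then have "y \<in> ?L" using U by blast
      then obtain k where k: "k \<ge> N" "dist (x k) y < \<delta> / 4" unfolding lv_char using dpos
        by (metis divide_pos_pos zero_less_numeral)
      have "f (x k) \<ge> f y - 2 * dist (x k) y" using lip[of "x k" y] by linarith
      then have "f (x k) > \<delta> / 2" using fC2[OF y] k by linarith
      then show "\<exists>k\<ge>N. f (x k) > \<delta> / 2" using k by blast
    qed
    obtain M where M: "\<forall>k\<ge>M. dist (x (Suc k)) (x k) < \<delta> / 2"
      using st dpos unfolding lim_sequentially by (auto dest!: spec[of _ "\<delta>/2"])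
    have stf: "\<forall>k\<ge>M. \<bar>f (x (Suc k)) - f (x k)\<bar> < \<delta> / 2 - (- \<delta> / 2)"
    proof (intro allI impI)
      fix k assume "k \<ge> M"
      then show "\<bar>f (x (Suc k)) - f (x k)\<bar> < \<delta> / 2 - (- \<delta> / 2)"
        using lip[of "x (Suc k)" "x k"] M by force
    qed
    have mid: "\<exists>k\<ge>N. \<bar>f (x k)\<bar> \<le> \<delta> / 2" for N
      using crossing[of "- \<delta> / 2" "\<delta> / 2" "\<lambda>k. f (x k)" M N] dpos lo hi stf by force
    then have "infinite {k. \<bar>f (x k)\<bar> \<le> \<delta> / 2}"
      unfolding infinite_nat_iff_unbounded_le by blast
    from infinite_enumerate[OF this] obtain r :: "nat \<Rightarrow> nat" where r0: "strict_mono r" "\<forall>n. r n \<in> {k. \<bar>f (x k)\<bar> \<le> \<delta> / 2}"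
      by blast
    then have r: "strict_mono r" "\<forall>n. \<bar>f (x (r n))\<bar> \<le> \<delta> / 2" by auto
    obtain l r' where l: "l \<in> K" "strict_mono r'" "((x \<circ> r) \<circ> r') \<longlonglongrightarrow> l"
      using seq_compactE[OF compact_imp_seq_compact[OF K], of "x \<circ> r"] xK by auto
    have eqo: "x \<circ> (r \<circ> r') = (x \<circ> r) \<circ> r'" by (simp add: o_assoc)
    have "l \<in> ?L" unfolding limit_vectors_def
      using strict_mono_o[OF r(1) l(2)] l(3) unfolding eqo[symmetric] by blast
    then have "l \<in> C1 \<or> l \<in> C2" using U by blast
    then have fl: "\<bar>f l\<bar> \<ge> \<delta>"
    proof
      assume "l \<in> C1" then show ?thesis using fC1[of l] dpos by linarith
    next
      assume "l \<in> C2" then show ?thesis using fC2[of l] dpos by linarith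
    qed
    obtain j where j: "dist (((x \<circ> r) \<circ> r') j) l < \<delta> / 4"
    proof -
      have "\<delta> / 4 > 0" using dpos by simp
      then obtain no where "\<forall>n\<ge>no. dist (((x \<circ> r) \<circ> r') n) l < \<delta> / 4"
        using l(3) unfolding lim_sequentially by blast
      then show ?thesis using that by blast
    qed
    have "\<bar>f l\<bar> \<le> \<bar>f (x (r (r' j)))\<bar> + 2 * dist (x (r (r' j))) l"
      using lip[of "x (r (r' j))" l] by linarith
    then show False using r(2)[rule_format, of "r' j"] j fl dpos by simp
  qed
qed



lemma unit_rsd: "\<not> ann B u s \<Longrightarrow> norm (rsd B s u /\<^sub>R norm (rsd B s u)) = 1"
  using rsd_nz[of B u s] by simp

lemma norm_diff_sq: "norm (a - b)^2 = norm a ^ 2 + norm b ^ 2 - 2 * inner a (b::'a::real_inner)"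
  by (simp add: power2_norm_eq_inner inner_diff_left inner_diff_right inner_commute)

lemma not_ann_le: "\<not> ann B u s \<Longrightarrow> j \<le> s \<Longrightarrow> \<not> ann B u j"
  using ann_mono by blast

lemma Tcont:
  assumes "\<not> ann B y s"
  shows "isCont (\<lambda>z. rsd B s z /\<^sub>R norm (rsd B s z)) y"
proof -
  have "\<forall>j<s. rsd B j y \<noteq> 0" using assms not_ann_le rsd_nz by (metis less_imp_le)
  then have c: "isCont (rsd B s) y" by (rule rsd_cont)
  have "rsd B s y \<noteq> 0" using rsd_nz[OF assms] .
  then show ?thesis using c by (intro continuous_intros) auto
qed

theorem theorem3p5:
  fixes A :: "real^'n^'n" and s :: nat and v0 :: "real^'n"
  assumes "1 \<le> s" and "s < min_poly_degree A"
    and "norm v0 = 1" and "grade A v0 \<ge> s + 1"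
  shows "closed (limit_vectors (aci_seq s A v0))
       \<and> connected (limit_vectors (aci_seq s A v0))
       \<and> limit_vectors (aci_seq s A v0) \<subseteq> Sigma_set s A
       \<and> (\<forall>v\<in>limit_vectors (aci_seq s A v0).
             v = T_map s (transpose A) (T_map s A v))"
proof -
  define v where "v = aci_seq s A v0"
  define At where "At = transpose A"
  have AtA: "transpose At = A" by (simp add: At_def)
  define Ta where "Ta z = rsd A s z /\<^sub>R norm (rsd A s z)" for z
  define Tt where "Tt z = rsd At s z /\<^sub>R norm (rsd At s z)" for z
  have vS: "v (Suc k) = T_map s At (T_map s A (v k))" for k by (simp add: v_def At_def)
  have inv: "norm (v k) = 1 \<and> \<not> ann A (v k) s" for k
  proof (induction k)
    case 0 then show ?case using assms(3,4) grade_iff[of s A v0] by (simp add: v_def)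
  next
    case (Suc k)
    then have na: "\<not> ann A (v k) s" by simp
    have w: "T_map s A (v k) = Ta (v k)" using T_map_eq[OF na] by (simp add: Ta_def)
    have nw: "\<not> ann At (Ta (v k)) s" using L1[OF na] by (simp add: Ta_def At_def)
    have v': "v (Suc k) = Tt (Ta (v k))" unfolding vS w T_map_eq[OF nw] Tt_def ..
    have "\<not> ann (transpose At) (Tt (Ta (v k))) s" using L1[OF nw] by (simp add: Tt_def)
    then show ?case unfolding v' using unit_rsd[OF nw] by (simp add: AtA Tt_def)
  qed
  have na: "\<not> ann A (v k) s" for k using inv by simp
  have nv: "norm (v k) = 1" for k using inv by simp
  have nw: "\<not> ann At (Ta (v k)) s" for k using L1[OF na[of k]] by (simp add: Ta_def At_def)
  have step: "v (Suc k) = Tt (Ta (v k))" for k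
    unfolding vS T_map_eq[OF na[of k]] Ta_def[symmetric] T_map_eq[OF nw[of k]] Tt_def ..
  define \<mu> where "\<mu> k = norm (rsd A s (v k))" for k
  define \<nu> where "\<nu> k = norm (rsd At s (Ta (v k)))" for k
  have mupos: "\<mu> k > 0" for k using rsd_nz[OF na[of k]] by (simp add: \<mu>_def)
  have nupos: "\<nu> k > 0" for k using rsd_nz[OF nw[of k]] by (simp add: \<nu>_def)
  have nTa: "norm (Ta (v k)) = 1" for k using unit_rsd[OF na[of k]] by (simp add: Ta_def)
  have e1: "inner (rsd At s (Ta (v k))) (v k) = \<mu> k" for k
    using L2[OF na[of k]] by (simp add: At_def Ta_def \<mu>_def)
  have e2: "inner (rsd A s (v (Suc k))) (Ta (v k)) = \<nu> k" for k
    using L2[OF nw[of k]] unfolding AtA step Tt_def[symmetric] by (simp add: \<nu>_def)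
  have m1: "\<mu> k \<le> \<nu> k" for k
    using e1[of k] norm_cauchy_schwarz[of "rsd At s (Ta (v k))" "v k"] nv[of k] by (simp add: \<nu>_def)
  have m2: "\<nu> k \<le> \<mu> (Suc k)" for k
    using e2[of k] norm_cauchy_schwarz[of "rsd A s (v (Suc k))" "Ta (v k)"] nTa[of k] by (simp add: \<mu>_def)
  have incm: "incseq \<mu>" using m1 m2 by (intro incseq_SucI) (meson order_trans)
  have mge: "\<mu> 0 \<le> \<mu> k" for k using incm by (simp add: incseq_def)
  obtain Bd where Bd: "\<forall>x. norm (krylov_vec A s x) \<le> Bd * norm x"
    using linear_bounded[OF kv_linear[of A s]] by blast
  have mub: "\<mu> k \<le> Bd" for k
  proof -
    have "\<mu> k \<le> norm (\<Sum>j\<le>s. (if j = s then 1 else 0) *\<^sub>R krylov_vec A j (v k))"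
      unfolding \<mu>_def by (rule min_norm) simp
    also have "(\<Sum>j\<le>s. (if j = s then 1 else (0::real)) *\<^sub>R krylov_vec A j (v k)) = krylov_vec A s (v k)"
      unfolding sum_split by simp
    finally show ?thesis using Bd nv[of k] by (metis mult.right_neutral order_trans)
  qed
  have "\<mu> \<longlonglongrightarrow> Sup (range \<mu>)"
    using mub incm by (intro LIMSEQ_incseq_SUP) (auto simp: bdd_above_def)
  then have dmu: "(\<lambda>k. \<mu> (Suc k) - \<mu> k) \<longlonglongrightarrow> 0"
    using tendsto_diff[OF LIMSEQ_Suc] by fastforce
  have inn: "inner (v (Suc k)) (v k) = \<mu> k / \<nu> k" for k
    unfolding step Tt_def using e1[of k] by (simp add: \<nu>_def divide_inverse mult.commute)
  have dle: "dist (v (Suc k)) (v k) \<le> sqrt (2 * (\<mu> (Suc k) - \<mu> k) / \<mu> 0)" for k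
  proof (rule real_le_rsqrt)
    have "(dist (v (Suc k)) (v k))^2 = 2 - 2 * (\<mu> k / \<nu> k)"
      unfolding dist_norm norm_diff_sq inn nv by simp
    also have "\<dots> = 2 * (\<nu> k - \<mu> k) / \<nu> k" using nupos[of k] by (simp add: field_simps)
    also have "\<dots> \<le> 2 * (\<nu> k - \<mu> k) / \<mu> 0"
      using mupos[of 0] mge[of k] m1[of k] by (intro divide_left_mono) auto
    also have "\<dots> \<le> 2 * (\<mu> (Suc k) - \<mu> k) / \<mu> 0"
      using mupos[of 0] m2[of k] by (intro divide_right_mono) auto
    finally show "(dist (v (Suc k)) (v k))^2 \<le> 2 * (\<mu> (Suc k) - \<mu> k) / \<mu> 0" .
  qed
  have "(\<lambda>k. sqrt (2 * (\<mu> (Suc k) - \<mu> k) / \<mu> 0)) \<longlonglongrightarrow> sqrt (2 * 0 / \<mu> 0)"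
    using mupos[of 0] by (intro tendsto_intros dmu) auto
  then have sq0: "(\<lambda>k. sqrt (2 * (\<mu> (Suc k) - \<mu> k) / \<mu> 0)) \<longlonglongrightarrow> 0" by simp
  have dst: "(\<lambda>k. dist (v (Suc k)) (v k)) \<longlonglongrightarrow> 0"
    by (rule tendsto_sandwich[OF _ _ tendsto_const sq0]) (simp, rule always_eventually, use dle in blast)
  have cl: "closed (limit_vectors v)" by (rule lv_closed)
  have sph: "\<forall>k. v k \<in> sphere 0 1" using nv by simp
  have co: "connected (limit_vectors v)" by (rule lv_connected[OF compact_sphere sph dst])
  have inS: "norm y = 1 \<and> \<not> ann A y s" if yL: "y \<in> limit_vectors v" for y
  proof -
    obtain r where r: "strict_mono r" "(v \<circ> r) \<longlonglongrightarrow> y" using yL unfolding limit_vectors_def by blast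
    have "y \<in> sphere 0 1" by (rule closed_sequentially[OF closed_sphere _ r(2)]) (use sph in simp)
    then have ny: "norm y = 1" by simp
    have "\<not> ann A y s"
    proof
      assume "ann A y s"
      then obtain c where c: "c s = 1" "(\<Sum>j\<le>s. c j *\<^sub>R krylov_vec A j y) = 0" unfolding ann_def by blast
      have ic: "isCont (\<lambda>z. \<Sum>j\<le>s. c j *\<^sub>R krylov_vec A j z) y"
        by (intro continuous_intros kv_cont)
      have "(\<lambda>n. \<Sum>j\<le>s. c j *\<^sub>R krylov_vec A j ((v \<circ> r) n)) \<longlonglongrightarrow> (\<Sum>j\<le>s. c j *\<^sub>R krylov_vec A j y)"
        by (rule isCont_tendsto_compose[OF ic r(2)])
      then have "(\<lambda>n. norm (\<Sum>j\<le>s. c j *\<^sub>R krylov_vec A j ((v \<circ> r) n))) \<longlonglongrightarrow> 0"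
        using c(2) tendsto_norm_zero_iff by fastforce
      then have "\<forall>\<^sub>F n in sequentially. norm (\<Sum>j\<le>s. c j *\<^sub>R krylov_vec A j ((v \<circ> r) n)) < \<mu> 0"
        using mupos[of 0] by (rule order_tendstoD(2))
      then obtain n where n: "norm (\<Sum>j\<le>s. c j *\<^sub>R krylov_vec A j (v (r n))) < \<mu> 0"
        by (auto simp: eventually_sequentially)
      have "\<mu> (r n) \<le> norm (\<Sum>j\<le>s. c j *\<^sub>R krylov_vec A j (v (r n)))"
        unfolding \<mu>_def by (rule min_norm[where c=c and s=s, OF c(1)])
      then show False using n mge[of "r n"] by simp
    qed
    with ny show ?thesis by simp
  qed
  have sub: "limit_vectors v \<subseteq> Sigma_set s A"
    using inS grade_iff by (auto simp: Sigma_set_def)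
  have fixp: "y = T_map s At (T_map s A y)" if yL: "y \<in> limit_vectors v" for y
  proof -
    obtain r where r: "strict_mono r" "(v \<circ> r) \<longlonglongrightarrow> y" using yL unfolding limit_vectors_def by blast
    have nay: "\<not> ann A y s" using inS[OF yL] by simp
    have nty: "\<not> ann At (Ta y) s" using L1[OF nay] by (simp add: Ta_def At_def)
    have gy: "T_map s At (T_map s A y) = Tt (Ta y)"
      unfolding T_map_eq[OF nay] Ta_def[symmetric] T_map_eq[OF nty] Tt_def ..
    have ic: "isCont (\<lambda>z. Tt (Ta z)) y"
    proof -
      have c1: "isCont Ta y" unfolding Ta_def[abs_def] by (rule Tcont[OF nay])
      have c2: "isCont Tt (Ta y)" unfolding Tt_def[abs_def] by (rule Tcont[OF nty])
      show ?thesis by (rule isCont_o2[OF c1 c2])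
    qed
    have l1: "(\<lambda>n. Tt (Ta ((v \<circ> r) n))) \<longlonglongrightarrow> Tt (Ta y)"
      by (rule isCont_tendsto_compose[OF ic r(2)])
    have "(\<lambda>n. v (Suc (r n)) - v (r n)) \<longlonglongrightarrow> 0"
    proof -
      have "((\<lambda>k. dist (v (Suc k)) (v k)) \<circ> r) \<longlonglongrightarrow> 0" by (rule LIMSEQ_subseq_LIMSEQ[OF dst r(1)])
      then show ?thesis by (simp add: o_def dist_norm tendsto_norm_zero_iff)
    qed
    then have "(\<lambda>n. (v \<circ> r) n + (v (Suc (r n)) - v (r n))) \<longlonglongrightarrow> y + 0"
      by (intro tendsto_add r(2))
    then have l2: "(\<lambda>n. Tt (Ta ((v \<circ> r) n))) \<longlonglongrightarrow> y" by (simp add: step)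
    show ?thesis using LIMSEQ_unique[OF l2 l1] gy by simp
  qed
  show ?thesis
    using cl co sub fixp unfolding v_def At_def by blast
qed

end
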